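(* Consider the hybrid size-control closed loop (context) and assume $x(t)\in\mathcal M_n$ for all $t\ge0$. Let $\beta=\sqrt{2(1-\cos(2\pi/n))}$, $\gamma_m=\sin(m\pi/n)/\sin(\pi/n)$ (so that $\|x_{i+m}-x_i\|=\gamma_m\|x_{i+1}-x_i\|$ for $x\in\mathcal M_n$), $\Gamma=\sum_{m=1}^N k_m\gamma_m$ and $C=2\beta\Gamma$. Then $p_1(t)=\dots=p_n(t)=\bar p(t)$, on each interval $[\ell\tau,(\ell+1)\tau)$ one has $\dot p_i=C\sin(\alpha_s)(p_i-1)$ with $\alpha_s=\alpha_{s_0}f_s(p_i((\ell-1)\tau))$ constant, and consequently, writing $p_{i_\ell}:=p_i(\ell\tau)$, $$p_{i_{\ell+1}}=(p_{i_\ell}-1)\,e^{C\sin(\alpha_{s_0}f_s(p_{i_{\ell-1}}))\tau}+1 .$$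
   Context: $n\ge3$ robots, $x=(x_1^T,\dots,x_n^T)^T$, indices mod $n$; $e_z=(0,0,1)^T$; $R_\theta$ is counterclockwise rotation by $\theta$ about $e_z$; $L_m$ is the $n\times n$ circulant matrix with first row having $1$ in position 1, $-1$ in position $m+1$, zeros elsewhere. $\mathcal M_n$ is the set of $x$ with $x_{i+1}-x_i=R_{2\pi/n}(x_{i+2}-x_{i+1})$ ($i=1,\dots,n-2$) and $e_z^T(x_n-x_{n-1})=e_z^T(x_1-x_n)$. Size control: $\rho>0$; $p_i(x)=1-\|x_{i+1}-x_i\|/\rho$; $\bar p=\frac1n\sum_ip_i$; $f_s$ continuous odd, $pf_s(p)>0$ for $p\neq0$, $|f_s|\le1$, $f_s'(0)>a>0$; $\alpha_{s_0}>0$, $\tau>0$, $0<N<n-1$, $k_m>0$. Closed loop: $\dot x=-\sum_{m=1}^Nk_m(L_m\otimes R_{\alpha_m}+L_m^T\otimes R_{\alpha_m}^T)x$ on $[\ell\tau,(\ell+1)\tau)$, $\ell=0,1,\dots$, with $\alpha_m=m\pi/n+\alpha_{s_0}f_s(\bar p(x((\ell-1)\tau)))$ (for $\ell=0$ use $x(0)$). *)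

theory Defs
  imports "HOL-Analysis.Analysis"
begin

text \<open>Robots are indexed 0..n-1 (paper: 1..n); positions in R^3 = real^3.
  A configuration is y :: nat => real^3, only indices < n matter; indices are taken mod n.\<close>

definition rot :: "real \<Rightarrow> real^3^3" where
  "rot \<theta> = (\<chi> i j.
     if i = 1 \<and> j = 1 then cos \<theta> else if i = 1 \<and> j = 2 then - sin \<theta>
     else if i = 2 \<and> j = 1 then sin \<theta> else if i = 2 \<and> j = 2 then cos \<theta>
     else if i = 3 \<and> j = 3 then 1 else 0)"

definition ez_comp :: "real^3 \<Rightarrow> real" where
  "ez_comp v = v $ 3"

text \<open>The n x n circulant matrix L_m (0-indexed entries i,j < n): entry (i,j) equals c((j-i) mod n)
  where the first row c has 1 in position 0 and -1 in position m.\<close>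
definition Lc :: "nat \<Rightarrow> nat \<Rightarrow> nat \<Rightarrow> nat \<Rightarrow> real" where
  "Lc n m i j = (if (j + n - i) mod n = 0 then 1 else if (j + n - i) mod n = m then -1 else 0)"

text \<open>Component i of ((L \<otimes> A) + (L^T \<otimes> A^T)) y, summed with gains, negated: closed-loop vector field.\<close>
definition rhs :: "nat \<Rightarrow> nat \<Rightarrow> (nat \<Rightarrow> real) \<Rightarrow> (nat \<Rightarrow> real) \<Rightarrow> (nat \<Rightarrow> real^3) \<Rightarrow> nat \<Rightarrow> real^3" where
  "rhs n N k \<alpha> y i = - (\<Sum>m\<in>{1..N}. k m *\<^sub>R
      (\<Sum>j<n. Lc n m i j *\<^sub>R (rot (\<alpha> m) *v y j)
             + Lc n m j i *\<^sub>R (transpose (rot (\<alpha> m)) *v y j)))"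

definition inMn :: "nat \<Rightarrow> (nat \<Rightarrow> real^3) \<Rightarrow> bool" where
  "inMn n y \<longleftrightarrow>
     (\<forall>i. i + 2 < n \<longrightarrow> y (i+1) - y i = rot (2*pi/n) *v (y (i+2) - y (i+1))) \<and>
     ez_comp (y (n-1) - y (n-2)) = ez_comp (y 0 - y (n-1))"

definition pfun :: "real \<Rightarrow> nat \<Rightarrow> (nat \<Rightarrow> real^3) \<Rightarrow> nat \<Rightarrow> real" where
  "pfun \<rho> n y i = 1 - norm (y ((i+1) mod n) - y i) / \<rho>"

definition pbar :: "real \<Rightarrow> nat \<Rightarrow> (nat \<Rightarrow> real^3) \<Rightarrow> real" where
  "pbar \<rho> n y = (\<Sum>i<n. pfun \<rho> n y i) / real n"

definition samp :: "real \<Rightarrow> nat \<Rightarrow> real" where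
  "samp \<tau> l = (if l = 0 then 0 else (real l - 1) * \<tau>)"

definition alphas :: "nat \<Rightarrow> real \<Rightarrow> (real \<Rightarrow> real) \<Rightarrow> real \<Rightarrow> (nat \<Rightarrow> real^3) \<Rightarrow> nat \<Rightarrow> real" where
  "alphas n as0 fs \<rho> y m = real m * pi / real n + as0 * fs (pbar \<rho> n y)"

definition beta :: "nat \<Rightarrow> real" where
  "beta n = sqrt (2 * (1 - cos (2*pi/real n)))"

definition gam :: "nat \<Rightarrow> nat \<Rightarrow> real" where
  "gam n m = sin (real m * pi / real n) / sin (pi / real n)"

definition Gam :: "nat \<Rightarrow> nat \<Rightarrow> (nat \<Rightarrow> real) \<Rightarrow> real" where
  "Gam n N k = (\<Sum>m\<in>{1..N}. k m * gam n m)"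

definition Cconst :: "nat \<Rightarrow> nat \<Rightarrow> (nat \<Rightarrow> real) \<Rightarrow> real" where
  "Cconst n N k = 2 * beta n * Gam n N k"

end

theory Submission
  imports Defs
begin

definition cpx :: "real^3 \<Rightarrow> complex" where "cpx v = Complex (v$1) (v$2)"
definition om :: "nat \<Rightarrow> complex" where "om n = cis (-2*pi/real n)"

lemma cpx_lin: "bounded_linear cpx"
proof -
  have "cpx = (\<lambda>v. of_real (v$1) + \<i> * of_real (v$2))" by (auto simp: cpx_def fun_eq_iff complex_eq_iff)
  moreover have "bounded_linear (\<lambda>v::real^3. of_real (v$1) + \<i> * (of_real (v$2)::complex))"
    by (intro bounded_linear_add bounded_linear_compose[OF bounded_linear_mult_right] bounded_linear_compose[OF bounded_linear_of_real] bounded_linear_vec_nth)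
  ultimately show ?thesis by simp
qed

lemma om_pow: "om n ^ m = cis (- 2 * pi * real m / real n)"
  unfolding om_def Complex.DeMoivre by (rule arg_cong[where f=cis], simp)

lemma om_n: "n > 0 \<Longrightarrow> om n ^ n = 1"
  by (simp add: om_pow complex_eq_iff)

lemma om_nm: "m \<le> n \<Longrightarrow> n > 0 \<Longrightarrow> om n ^ (n - m) = cis (2 * pi * real m / real n)"
proof -
  assume a: "m \<le> n" "n > 0"
  have "om n ^ (n - m) * om n ^ m = 1" using a by (simp add: power_add[symmetric] om_n)
  hence "inverse (om n ^ m) = om n ^ (n-m)" by (intro inverse_unique) (simp add: mult.commute)
  hence "om n ^ (n-m) = inverse (om n ^ m)" by simp
  thus ?thesis by (simp add: om_pow)
qed

lemma om_ne1: "n \<ge> 3 \<Longrightarrow> om n \<noteq> 1"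
proof
  assume n: "n \<ge> 3" and e: "om n = 1"
  have "sin (2*pi/real n) > 0" using n by (intro sin_gt_zero) (auto simp: field_simps)
  moreover have "Im (om n) = - sin (2*pi/real n)" by (simp add: om_def)
  ultimately show False using e by simp
qed

lemma term_eq:
  fixes m n :: nat and s :: real
  assumes "m \<le> n" "n > 0"
  shows "cis (real m * pi / real n + s) * (1 - om n ^ m) + cis (-(real m * pi / real n + s)) * (1 - om n ^ (n - m))
     = of_real (- 4 * sin s * sin (real m * pi / real n))"
proof -
  define a where "a = real m * pi / real n"
  have e1: "om n ^ m = cis (- 2 * a)" unfolding om_pow a_def by (rule arg_cong[where f=cis]) simp
  have e2: "om n ^ (n-m) = cis (2 * a)" using assms unfolding a_def by (simp add: om_nm) (rule arg_cong[where f=cis], simp)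
  have "cis (a + s) * (1 - cis (- 2 * a)) + cis (-(a + s)) * (1 - cis (2 * a))
     = cis (a + s) + cis (-(a+s)) - cis (s - a) - cis (-(s-a))"
    by (simp add: algebra_simps cis_mult)
  also have "\<dots> = of_real (- 4 * sin s * sin a)"
    by (simp add: complex_eq_iff cos_add cos_diff sin_add sin_diff)
  finally show ?thesis unfolding a_def[symmetric] e1 e2 .
qed



lemma mod_sub_form: "(i::nat) < n \<Longrightarrow> j < n \<Longrightarrow> (j + n - i) mod n = (if i \<le> j then j - i else j + n - i)"
proof (cases "i \<le> j")
  case True
  assume a: "i < n" "j < n"
  have "(j + n - i) mod n = (n + (j - i)) mod n" using True by (simp add: add.commute)
  also have "\<dots> = j - i" using a by simp
  finally show ?thesis using True by simp
qed simp

lemma mod_add_form: "(i::nat) < n \<Longrightarrow> m < n \<Longrightarrow> (i + m) mod n = (if i + m < n then i + m else i + m - n)"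
  by (simp add: mod_if[of "i+m"])

lemma Lc_sum1:
  fixes f :: "nat \<Rightarrow> 'a::real_vector"
  assumes "i < n" "0 < m" "m < n"
  shows "(\<Sum>j<n. Lc n m i j *\<^sub>R f j) = f i - f ((i + m) mod n)"
proof -
  have "\<And>j. j < n \<Longrightarrow> Lc n m i j *\<^sub>R f j = (if j = i then f j else 0) - (if j = (i+m) mod n then f j else 0)"
    using assms by (auto simp: Lc_def mod_sub_form mod_add_form split: if_splits)
  hence "(\<Sum>j<n. Lc n m i j *\<^sub>R f j) = (\<Sum>j<n. (if j = i then f j else 0) - (if j = (i+m) mod n then f j else 0))"
    by (intro sum.cong) auto
  also have "\<dots> = f i - f ((i + m) mod n)"
    using assms by (simp add: sum_subtractf)
  finally show ?thesis .
qed

lemma Lc_sum2: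
  fixes f :: "nat \<Rightarrow> 'a::real_vector"
  assumes "i < n" "0 < m" "m < n"
  shows "(\<Sum>j<n. Lc n m j i *\<^sub>R f j) = f i - f ((i + (n - m)) mod n)"
proof -
  have "\<And>j. j < n \<Longrightarrow> Lc n m j i *\<^sub>R f j = (if j = i then f j else 0) - (if j = (i+(n-m)) mod n then f j else 0)"
    using assms by (auto simp: Lc_def mod_sub_form mod_add_form split: if_splits)
  hence "(\<Sum>j<n. Lc n m j i *\<^sub>R f j) = (\<Sum>j<n. (if j = i then f j else 0) - (if j = (i+(n-m)) mod n then f j else 0))"
    by (intro sum.cong) auto
  also have "\<dots> = f i - f ((i + (n-m)) mod n)"
    using assms by (simp add: sum_subtractf)
  finally show ?thesis .
qed



lemma cpx_rot: "cpx (rot \<theta> *v v) = cis \<theta> * cpx v"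
  by (simp add: cpx_def rot_def matrix_vector_mult_def sum_3 complex_eq_iff cis.ctr algebra_simps)
lemma cpx_rotT: "cpx (transpose (rot \<theta>) *v v) = cis (-\<theta>) * cpx v"
  by (simp add: cpx_def rot_def transpose_def matrix_vector_mult_def sum_3 complex_eq_iff cis.ctr algebra_simps)
lemma rot3: "(rot \<theta> *v v) $ 3 = v $ 3"
  by (simp add: rot_def matrix_vector_mult_def sum_3)
lemma norm_cpx: "v$3 = 0 \<Longrightarrow> norm v = cmod (cpx v)"
  by (simp add: cpx_def norm_vec_def L2_set_def sum_3 cmod_def)
lemma cpx_diff: "cpx (a - b) = cpx a - cpx b"
  by (simp add: linear_diff[OF bounded_linear.linear[OF cpx_lin]])

lemma Mn_struct:
  assumes n: "n \<ge> 3" and M: "inMn n y"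
  shows "\<exists>c w h. \<forall>j<n. cpx (y j) = c + w * om n ^ j \<and> y j $ 3 = h"
proof -
  define D where "D j = cpx (y (Suc j)) - cpx (y j)" for j
  define e where "e j = y (Suc j) $ 3 - y j $ 3" for j
  have step: "D (Suc j) = om n * D j \<and> e (Suc j) = e j" if "j + 2 < n" for j
  proof -
    have h: "y (j+1) - y j = rot (2*pi/n) *v (y (j+2) - y (j+1))" using M that by (auto simp: inMn_def)
    have "D j = cis (2*pi/n) * D (Suc j)"
      using arg_cong[OF h, of cpx] by (simp add: cpx_diff cpx_rot D_def numeral_2_eq_2)
    hence "om n * D j = D (Suc j)" by (simp add: om_def cis_mult)
    moreover have "e j = e (Suc j)"
      using arg_cong[OF h, of "\<lambda>v. v $ 3"] by (simp add: rot3 e_def numeral_2_eq_2)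
    ultimately show ?thesis by simp
  qed
  have A: "D j = om n ^ j * D 0 \<and> e j = e 0" if "j \<le> n - 2" for j
    using that
  proof (induction j)
    case (Suc j)
    then have "j + 2 < n" using n by linarith
    with step[OF this] Suc show ?case by simp
  qed simp
  have o1: "om n - 1 \<noteq> 0" using om_ne1[OF n] by simp
  define w where "w = D 0 / (om n - 1)"
  define c where "c = cpx (y 0) - w"
  have B: "cpx (y j) = c + w * om n ^ j \<and> y j $ 3 = y 0 $ 3 + real j * e 0" if "j \<le> n - 1" for j
    using that
  proof (induction j)
    case 0 then show ?case by (simp add: c_def)
  next
    case (Suc j)
    then have j: "j \<le> n - 2" by linarith
    have "cpx (y (Suc j)) = cpx (y j) + D j" by (simp add: D_def)
    also have "\<dots> = c + w * om n ^ j + om n ^ j * (w * (om n - 1))"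
      using Suc j A[OF j] o1 by (simp add: w_def)
    also have "\<dots> = c + w * om n ^ Suc j" by (simp add: algebra_simps)
    finally have 1: "cpx (y (Suc j)) = c + w * om n ^ Suc j" .
    have "y (Suc j) $ 3 = y j $ 3 + e j" by (simp add: e_def)
    hence "y (Suc j) $ 3 = y 0 $ 3 + real (Suc j) * e 0" using Suc j A[OF j] by (simp add: algebra_simps)
    with 1 show ?case by simp
  qed
  have last: "ez_comp (y (n-1) - y (n-2)) = ez_comp (y 0 - y (n-1))" using M by (simp add: inMn_def)
  have sn: "Suc (n-2) = n - 1" using n by simp
  have "e (n-2) = e 0" using A[of "n-2"] by simp
  moreover have "e (n-2) = y (n-1) $ 3 - y (n-2) $ 3" by (simp add: e_def sn)
  ultimately have "e 0 = y 0 $ 3 - y (n-1) $ 3" using last by (simp add: ez_comp_def)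
  also have "\<dots> = - (real (n-1) * e 0)" using B[of "n-1"] by simp
  finally have "real n * e 0 = 0" using n by (simp add: of_nat_diff algebra_simps)
  hence e0: "e 0 = 0" using n by simp
  have "\<forall>j<n. cpx (y j) = c + w * om n ^ j \<and> y j $ 3 = y 0 $ 3"
  proof (intro allI impI)
    fix j assume "j < n"
    hence "j \<le> n - 1" by simp
    from B[OF this] e0 show "cpx (y j) = c + w * om n ^ j \<and> y j $ 3 = y 0 $ 3" by simp
  qed
  thus ?thesis by blast
qed

lemma Mn_mod:
  assumes "n > 0" "\<forall>j<n. cpx (y j) = c + w * om n ^ j"
  shows "cpx (y (j mod n)) = c + w * om n ^ j"
proof -
  have "om n ^ j = om n ^ (j mod n) * (om n ^ n) ^ (j div n)"
    by (metis mod_div_mult_eq power_add power_mult add.commute mult.commute)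
  thus ?thesis using assms by (simp add: om_n)
qed



lemma cpx_add: "cpx (a + b) = cpx a + cpx b" by (simp add: cpx_def complex_eq_iff)
lemma cpx_neg: "cpx (- a) = - cpx a" by (simp add: cpx_def complex_eq_iff)
lemma cpx_scaleR: "cpx (r *\<^sub>R a) = of_real r * cpx a" by (simp add: cpx_def complex_eq_iff)
lemma cpx_sum: "cpx (sum f A) = (\<Sum>x\<in>A. cpx (f x))"
  by (simp add: linear_sum[OF bounded_linear.linear[OF cpx_lin]])

definition mu :: "nat \<Rightarrow> nat \<Rightarrow> (nat \<Rightarrow> real) \<Rightarrow> (nat \<Rightarrow> real) \<Rightarrow> complex" where
  "mu n N k \<alpha> = - (\<Sum>m\<in>{1..N}. of_real (k m) * (cis (\<alpha> m) * (1 - om n ^ m) + cis (- \<alpha> m) * (1 - om n ^ (n - m))))"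

lemma rhs_cpx:
  assumes n: "n \<ge> 3" and N: "N < n" and i: "i < n" and Y: "\<forall>j<n. cpx (y j) = c + w * om n ^ j"
  shows "cpx (rhs n N k \<alpha> y i) = w * om n ^ i * mu n N k \<alpha>"
proof -
  have n0: "n > 0" using n by simp
  have zi: "cpx (y i) = c + w * om n ^ i" using Y i by simp
  have inner: "cpx (\<Sum>j<n. Lc n m i j *\<^sub>R (rot (\<alpha> m) *v y j) + Lc n m j i *\<^sub>R (transpose (rot (\<alpha> m)) *v y j))
     = w * om n ^ i * (cis (\<alpha> m) * (1 - om n ^ m) + cis (- \<alpha> m) * (1 - om n ^ (n - m)))"
    if m: "m \<in> {1..N}" for m
  proof -
    have m': "0 < m" "m < n" using m N by auto
    have S0: "(\<Sum>j<n. Lc n m i j *\<^sub>R (rot (\<alpha> m) *v y j) + Lc n m j i *\<^sub>R (transpose (rot (\<alpha> m)) *v y j))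
      = (rot (\<alpha> m) *v y i - rot (\<alpha> m) *v y ((i + m) mod n))
        + (transpose (rot (\<alpha> m)) *v y i - transpose (rot (\<alpha> m)) *v y ((i + (n - m)) mod n))"
      by (simp only: sum.distrib Lc_sum1[OF i m'] Lc_sum2[OF i m'])
    have S: "cpx (\<Sum>j<n. Lc n m i j *\<^sub>R (rot (\<alpha> m) *v y j) + Lc n m j i *\<^sub>R (transpose (rot (\<alpha> m)) *v y j))
      = cis (\<alpha> m) * (cpx (y i) - cpx (y ((i + m) mod n))) + cis (- \<alpha> m) * (cpx (y i) - cpx (y ((i + (n - m)) mod n)))"
      unfolding S0 cpx_add cpx_diff cpx_rot cpx_rotT by (simp add: algebra_simps)
    also have "\<dots> = cis (\<alpha> m) * (w * om n ^ i - w * om n ^ (i + m)) + cis (- \<alpha> m) * (w * om n ^ i - w * om n ^ (i + (n - m)))"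
      using Mn_mod[OF n0 Y] zi by simp
    also have "\<dots> = w * om n ^ i * (cis (\<alpha> m) * (1 - om n ^ m) + cis (- \<alpha> m) * (1 - om n ^ (n - m)))"
      by (simp add: power_add algebra_simps)
    finally show ?thesis .
  qed
  have "cpx (rhs n N k \<alpha> y i) = - (\<Sum>m\<in>{1..N}. of_real (k m) * (w * om n ^ i * (cis (\<alpha> m) * (1 - om n ^ m) + cis (- \<alpha> m) * (1 - om n ^ (n - m)))))"
    unfolding rhs_def cpx_neg cpx_sum cpx_scaleR
    by (intro arg_cong[where f=uminus] sum.cong refl) (simp only: inner[unfolded cpx_sum])
  also have "\<dots> = w * om n ^ i * mu n N k \<alpha>"
    by (simp add: mu_def sum_distrib_left algebra_simps)
  finally show ?thesis .
qed



lemma om_mod: "n > 0 \<Longrightarrow> om n ^ (j mod n) = om n ^ j"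
proof -
  assume n: "n > 0"
  have "om n ^ j = om n ^ (j mod n) * (om n ^ n) ^ (j div n)"
    by (metis mod_div_mult_eq power_add power_mult mult.commute)
  thus ?thesis using n by (simp add: om_n)
qed

lemma cmod_om: "cmod (om n) = 1" by (simp add: om_def)

lemma Mn_full:
  assumes n: "n \<ge> 3" and M: "inMn n y"
  shows "\<exists>c w. (\<forall>j<n. cpx (y j) = c + w * om n ^ j) \<and>
     (\<forall>i<n. cpx (y ((i+1) mod n)) - cpx (y i) = w * om n ^ i * (om n - 1) \<and>
            norm (y ((i+1) mod n) - y i) = cmod (cpx (y ((i+1) mod n)) - cpx (y i)))"
proof -
  obtain c w h where Y: "\<forall>j<n. cpx (y j) = c + w * om n ^ j \<and> y j $ 3 = h" using Mn_struct[OF n M] by blast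
  have n0: "n > 0" using n by simp
  have Y1: "\<forall>j<n. cpx (y j) = c + w * om n ^ j" using Y by simp
  have "cpx (y ((i+1) mod n)) - cpx (y i) = w * om n ^ i * (om n - 1) \<and>
            norm (y ((i+1) mod n) - y i) = cmod (cpx (y ((i+1) mod n)) - cpx (y i))" if i: "i < n" for i
  proof
    show "cpx (y ((i+1) mod n)) - cpx (y i) = w * om n ^ i * (om n - 1)"
      using Mn_mod[OF n0 Y1, of "i+1"] Y i by (simp add: algebra_simps)
    have "(y ((i+1) mod n) - y i) $ 3 = 0" using Y i n0 by simp
    thus "norm (y ((i+1) mod n) - y i) = cmod (cpx (y ((i+1) mod n)) - cpx (y i))"
      by (simp add: norm_cpx cpx_diff)
  qed
  thus ?thesis using Y1 by blast
qed

lemma beta_val: "n \<ge> 3 \<Longrightarrow> beta n = 2 * sin (pi / real n)"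
proof -
  assume n: "n \<ge> 3"
  have sp: "sin (pi / real n) > 0" using n by (intro sin_gt_zero) (auto simp: field_simps)
  have "2 * (1 - cos (2 * pi / real n)) = (2 * sin (pi / real n))^2"
    using cos_double_sin[of "pi / real n"] by (simp add: power2_eq_square)
  hence "beta n = sqrt ((2 * sin (pi / real n))^2)" unfolding beta_def by simp
  thus ?thesis using sp by (simp only: real_sqrt_abs)
qed

lemma C_val: "n \<ge> 3 \<Longrightarrow> Cconst n N k = 4 * (\<Sum>m\<in>{1..N}. k m * sin (real m * pi / real n))"
proof -
  assume n: "n \<ge> 3"
  have sp: "sin (pi / real n) > 0" using n by (intro sin_gt_zero) (auto simp: field_simps)
  have "Cconst n N k = (\<Sum>m\<in>{1..N}. (4 * sin (pi / real n)) * (k m * (sin (real m * pi / real n) / sin (pi / real n))))"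
    unfolding Cconst_def beta_val[OF n] Gam_def gam_def sum_distrib_left[symmetric] by simp
  also have "\<dots> = (\<Sum>m\<in>{1..N}. 4 * (k m * sin (real m * pi / real n)))"
    using sp by (intro sum.cong refl) (simp add: field_simps)
  finally show ?thesis by (simp add: sum_distrib_left)
qed

lemma mu_val:
  assumes n: "n \<ge> 3" and N: "N < n"
  shows "mu n N k (\<lambda>m. real m * pi / real n + s) = of_real (Cconst n N k * sin s)"
proof -
  have "mu n N k (\<lambda>m. real m * pi / real n + s) = - (\<Sum>m\<in>{1..N}. of_real (k m) * of_real (- 4 * sin s * sin (real m * pi / real n)))"
    unfolding mu_def using n N by (intro arg_cong[where f=uminus] sum.cong refl) (subst term_eq, auto)
  also have "\<dots> = of_real (- (\<Sum>m\<in>{1..N}. k m * (- 4 * sin s * sin (real m * pi / real n))))"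
    by simp
  also have "\<dots> = of_real (Cconst n N k * sin s)"
    by (rule arg_cong[where f=of_real]) (simp add: C_val[OF n] sum_distrib_left sum_distrib_right sum_negf mult_ac)
  finally show ?thesis .
qed



theorem mainTheorem10:
  fixes n N :: nat and k :: "nat \<Rightarrow> real" and \<rho> as0 \<tau> a :: real
    and fs :: "real \<Rightarrow> real" and x :: "real \<Rightarrow> nat \<Rightarrow> real^3"
  assumes n3: "n \<ge> 3"
    and rho: "\<rho> > 0"
    and fs_cont: "continuous_on UNIV fs"
    and fs_odd: "\<And>p. fs (- p) = - fs p"
    and fs_sign: "\<And>p. p \<noteq> 0 \<Longrightarrow> p * fs p > 0"
    and fs_bnd: "\<And>p. \<bar>fs p\<bar> \<le> 1"
    and fs_der: "\<exists>D. (fs has_real_derivative D) (at 0) \<and> D > a" and a_pos: "a > 0"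
    and as0: "as0 > 0" and tau: "\<tau> > 0"
    and N: "0 < N" "N < n - 1"
    and k: "\<And>m. 1 \<le> m \<Longrightarrow> m \<le> N \<Longrightarrow> k m > 0"
    and x_cont: "\<And>i. i < n \<Longrightarrow> continuous_on {0..} (\<lambda>t. x t i)"
    and x_ode: "\<And>(l::nat) t i. real l * \<tau> \<le> t \<Longrightarrow> t < (real l + 1) * \<tau> \<Longrightarrow> i < n \<Longrightarrow>
        ((\<lambda>s. x s i) has_vector_derivative
           rhs n N k (alphas n as0 fs \<rho> (x (samp \<tau> l))) (x t) i)
        (at t within {real l * \<tau> ..< (real l + 1) * \<tau>})"
    and x_Mn: "\<And>t. t \<ge> 0 \<Longrightarrow> inMn n (x t)"
  shows "(\<forall>t\<ge>0. \<forall>i<n. pfun \<rho> n (x t) i = pbar \<rho> n (x t))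
   \<and> (\<forall>(l::nat) t i. real l * \<tau> \<le> t \<longrightarrow> t < (real l + 1) * \<tau> \<longrightarrow> i < n \<longrightarrow>
        ((\<lambda>s. pfun \<rho> n (x s) i) has_real_derivative
           Cconst n N k * sin (as0 * fs (pfun \<rho> n (x (samp \<tau> l)) i)) * (pfun \<rho> n (x t) i - 1))
        (at t within {real l * \<tau> ..< (real l + 1) * \<tau>}))
   \<and> (\<forall>(l::nat) i. i < n \<longrightarrow>
        pfun \<rho> n (x ((real l + 1) * \<tau>)) i
          = (pfun \<rho> n (x (real l * \<tau>)) i - 1)
              * exp (Cconst n N k * sin (as0 * fs (pfun \<rho> n (x (samp \<tau> l)) i)) * \<tau>) + 1)"
proof -
  have n3: "n \<ge> 3" using n3 .
  have n0: "n > 0" using n3 by simp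
  have NN: "N < n" using N by simp
  have part1: "\<forall>t\<ge>0. \<forall>i<n. pfun \<rho> n (x t) i = pbar \<rho> n (x t)"
  proof (intro allI impI)
    fix t :: real and i :: nat assume t: "t \<ge> 0" and i: "i < n"
    obtain c w where CW: "\<forall>i<n. cpx (x t ((i+1) mod n)) - cpx (x t i) = w * om n ^ i * (om n - 1) \<and>
            norm (x t ((i+1) mod n) - x t i) = cmod (cpx (x t ((i+1) mod n)) - cpx (x t i))"
      using Mn_full[OF n3 x_Mn[OF t]] by blast
    define P where "P = 1 - cmod w * cmod (om n - 1) / \<rho>"
    have PP: "pfun \<rho> n (x t) j = P" if "j < n" for j
      using CW that by (simp add: pfun_def P_def norm_mult norm_power cmod_om)
    have "pbar \<rho> n (x t) = (\<Sum>j<n. P) / real n" unfolding pbar_def by (simp add: PP)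
    also have "\<dots> = P" using n0 by simp
    finally show "pfun \<rho> n (x t) i = pbar \<rho> n (x t)" using PP[OF i] by simp
  qed
  have samp0: "samp \<tau> l \<ge> 0" for l using tau by (simp add: samp_def)
  define s0 where "s0 l = as0 * fs (pbar \<rho> n (x (samp \<tau> l)))" for l
  define lam where "lam l = Cconst n N k * sin (s0 l)" for l
  define d where "d i s = cpx (x s ((i+1) mod n)) - cpx (x s i)" for i s
  have s0eq: "s0 l = as0 * fs (pfun \<rho> n (x (samp \<tau> l)) i)" if "i < n" for l i
    using part1 samp0[of l] that by (simp add: s0_def)
  have alph: "alphas n as0 fs \<rho> (x (samp \<tau> l)) = (\<lambda>m. real m * pi / real n + s0 l)" for l
    by (simp add: alphas_def s0_def fun_eq_iff)
  have cd: "continuous_on {0..} (d i)" if "i < n" for i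
  proof -
    have cj: "continuous_on {0..} (\<lambda>s. cpx (x s j))" if "j < n" for j
      using continuous_on_compose[OF x_cont[OF that] linear_continuous_on[OF cpx_lin]] by (simp add: o_def)
    show ?thesis unfolding d_def using that n0 by (intro continuous_on_diff cj) auto
  qed
  have key: "d i s = exp (lam l * (s - real l * \<tau>)) *\<^sub>R d i (real l * \<tau>)"
    if i: "i < n" and s: "s \<in> {real l * \<tau> .. (real l + 1) * \<tau>}" for l i s
  proof -
    define I where "I = {real l * \<tau> ..< (real l + 1) * \<tau>}"
    have i1: "(i+1) mod n < n" using n0 by simp
    have dd: "(d i has_vector_derivative lam l *\<^sub>R d i t) (at t within I)" if t: "t \<in> I" for t
    proof -
      have t0: "t \<ge> 0" using t tau by (auto simp: I_def intro: order_trans[rotated])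
      have h1: "((\<lambda>s. x s ((i+1) mod n)) has_vector_derivative rhs n N k (alphas n as0 fs \<rho> (x (samp \<tau> l))) (x t) ((i+1) mod n)) (at t within I)"
        using x_ode[of l t "(i+1) mod n"] t i1 by (simp add: I_def)
      have h2: "((\<lambda>s. x s i) has_vector_derivative rhs n N k (alphas n as0 fs \<rho> (x (samp \<tau> l))) (x t) i) (at t within I)"
        using x_ode[of l t i] t i by (simp add: I_def)
      have h: "(d i has_vector_derivative (cpx (rhs n N k (alphas n as0 fs \<rho> (x (samp \<tau> l))) (x t) ((i+1) mod n))
               - cpx (rhs n N k (alphas n as0 fs \<rho> (x (samp \<tau> l))) (x t) i))) (at t within I)"
        unfolding d_def[abs_def]
        by (intro has_vector_derivative_diff bounded_linear.has_vector_derivative[OF cpx_lin] h1 h2)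
      obtain c w where Y: "\<forall>j<n. cpx (x t j) = c + w * om n ^ j"
        and CW: "\<forall>i<n. cpx (x t ((i+1) mod n)) - cpx (x t i) = w * om n ^ i * (om n - 1) \<and>
            norm (x t ((i+1) mod n) - x t i) = cmod (cpx (x t ((i+1) mod n)) - cpx (x t i))"
        using Mn_full[OF n3 x_Mn[OF t0]] by blast
      have "cpx (rhs n N k (alphas n as0 fs \<rho> (x (samp \<tau> l))) (x t) ((i+1) mod n))
               - cpx (rhs n N k (alphas n as0 fs \<rho> (x (samp \<tau> l))) (x t) i)
          = w * om n ^ (i+1) * mu n N k (alphas n as0 fs \<rho> (x (samp \<tau> l))) - w * om n ^ i * mu n N k (alphas n as0 fs \<rho> (x (samp \<tau> l)))"
        using rhs_cpx[OF n3 NN i1 Y] rhs_cpx[OF n3 NN i Y] om_mod[OF n0] by simp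
      also have "\<dots> = (w * om n ^ i * (om n - 1)) * of_real (lam l)"
        unfolding alph mu_val[OF n3 NN] lam_def by (simp add: algebra_simps)
      also have "\<dots> = lam l *\<^sub>R d i t" using CW i by (simp add: d_def scaleR_conv_of_real)
      finally show ?thesis using h by simp
    qed
    define g where "g s = exp (- lam l * (s - real l * \<tau>)) *\<^sub>R d i s" for s
    have gd: "(g has_vector_derivative 0) (at t within I)" if t: "t \<in> I" for t
    proof -
      have "(g has_vector_derivative (exp (- lam l * (t - real l * \<tau>)) *\<^sub>R (lam l *\<^sub>R d i t)
              + (exp (- lam l * (t - real l * \<tau>)) * (- lam l)) *\<^sub>R d i t)) (at t within I)"
        unfolding g_def[abs_def]
        by (rule has_vector_derivative_scaleR[OF _ dd[OF t]]) (auto intro!: derivative_eq_intros)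
      thus ?thesis by (rule has_vector_derivative_eq_rhs) (simp add: algebra_simps)
    qed
    obtain C where gc: "\<And>s. s \<in> I \<Longrightarrow> g s = C"
      using has_vector_derivative_zero_constant[of I g] gd by (auto simp: I_def)
    have lI: "real l * \<tau> \<in> I" using tau by (simp add: I_def)
    have onI: "d i s = exp (lam l * (s - real l * \<tau>)) *\<^sub>R d i (real l * \<tau>)" if s: "s \<in> I" for s
    proof -
      have "g s = g (real l * \<tau>)" using gc[OF s] gc[OF lI] by simp
      hence "exp (- lam l * (s - real l * \<tau>)) *\<^sub>R d i s = d i (real l * \<tau>)" by (simp add: g_def)
      hence "exp (lam l * (s - real l * \<tau>)) *\<^sub>R (exp (- lam l * (s - real l * \<tau>)) *\<^sub>R d i s) = exp (lam l * (s - real l * \<tau>)) *\<^sub>R d i (real l * \<tau>)"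
        by simp
      thus ?thesis by (simp add: exp_minus_inverse exp_add[symmetric])
    qed
    have lt: "real l * \<tau> < (real l + 1) * \<tau>" using tau by (simp add: algebra_simps)
    have cont: "continuous_on (closure I) (\<lambda>s. d i s - exp (lam l * (s - real l * \<tau>)) *\<^sub>R d i (real l * \<tau>))"
    proof -
      have sub: "closure I \<subseteq> {0..}" using lt tau by (auto simp: I_def)
      show ?thesis
        by (intro continuous_on_diff continuous_on_subset[OF cd[OF i] sub] continuous_intros)
    qed
    have "d i s - exp (lam l * (s - real l * \<tau>)) *\<^sub>R d i (real l * \<tau>) = 0"
    proof (rule continuous_constant_on_closure[OF cont])
      show "\<And>y. y \<in> I \<Longrightarrow> d i y - exp (lam l * (y - real l * \<tau>)) *\<^sub>R d i (real l * \<tau>) = 0"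
        using onI by simp
      have "closure I = {real l * \<tau> .. (real l + 1) * \<tau>}" using lt unfolding I_def by (rule closure_atLeastLessThan)
      thus "s \<in> closure I" using s by simp
    qed
    thus ?thesis by simp
  qed
  have pf: "pfun \<rho> n (x s) i = 1 - exp (lam l * (s - real l * \<tau>)) * cmod (d i (real l * \<tau>)) / \<rho>"
    if i: "i < n" and s: "s \<in> {real l * \<tau> .. (real l + 1) * \<tau>}" for l i s
  proof -
    have s0': "s \<ge> 0" using s tau by (auto intro: order_trans[rotated])
    obtain c w where CW: "\<forall>i<n. cpx (x s ((i+1) mod n)) - cpx (x s i) = w * om n ^ i * (om n - 1) \<and>
            norm (x s ((i+1) mod n) - x s i) = cmod (cpx (x s ((i+1) mod n)) - cpx (x s i))"
      using Mn_full[OF n3 x_Mn[OF s0']] by blast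
    have "norm (x s ((i+1) mod n) - x s i) = cmod (d i s)" using CW i by (simp add: d_def)
    also have "\<dots> = exp (lam l * (s - real l * \<tau>)) * cmod (d i (real l * \<tau>))"
      by (simp add: key[OF i s])
    finally show ?thesis by (simp add: pfun_def)
  qed
  have part2: "\<forall>(l::nat) t i. real l * \<tau> \<le> t \<longrightarrow> t < (real l + 1) * \<tau> \<longrightarrow> i < n \<longrightarrow>
        ((\<lambda>s. pfun \<rho> n (x s) i) has_real_derivative
           Cconst n N k * sin (as0 * fs (pfun \<rho> n (x (samp \<tau> l)) i)) * (pfun \<rho> n (x t) i - 1))
        (at t within {real l * \<tau> ..< (real l + 1) * \<tau>})"
  proof (intro allI impI)
    fix l :: nat and t :: real and i :: nat
    assume t1: "real l * \<tau> \<le> t" and t2: "t < (real l + 1) * \<tau>" and i: "i < n"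
    define I where "I = {real l * \<tau> ..< (real l + 1) * \<tau>}"
    define A where "A = cmod (d i (real l * \<tau>))"
    have "((\<lambda>s. 1 - exp (lam l * (s - real l * \<tau>)) * A / \<rho>) has_real_derivative
           - (exp (lam l * (t - real l * \<tau>)) * lam l * A / \<rho>)) (at t within I)"
      using rho by (auto intro!: derivative_eq_intros)
    hence "((\<lambda>s. pfun \<rho> n (x s) i) has_real_derivative
           - (exp (lam l * (t - real l * \<tau>)) * lam l * A / \<rho>)) (at t within I)"
    proof (rule has_field_derivative_transform_within[where d=1])
      show "0 < (1::real)" by simp
      show "t \<in> I" using t1 t2 by (simp add: I_def)
      fix y assume "y \<in> I" "dist y t < 1"
      hence "y \<in> {real l * \<tau> .. (real l + 1) * \<tau>}" by (auto simp: I_def)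
      from pf[OF i this] show "1 - exp (lam l * (y - real l * \<tau>)) * A / \<rho> = pfun \<rho> n (x y) i"
        by (simp add: A_def)
    qed
    moreover have "- (exp (lam l * (t - real l * \<tau>)) * lam l * A / \<rho>) =
        Cconst n N k * sin (as0 * fs (pfun \<rho> n (x (samp \<tau> l)) i)) * (pfun \<rho> n (x t) i - 1)"
      using pf[OF i, of t l] t1 t2 s0eq[OF i, of l] by (simp add: lam_def A_def)
    ultimately show "((\<lambda>s. pfun \<rho> n (x s) i) has_real_derivative
           Cconst n N k * sin (as0 * fs (pfun \<rho> n (x (samp \<tau> l)) i)) * (pfun \<rho> n (x t) i - 1))
        (at t within {real l * \<tau> ..< (real l + 1) * \<tau>})" by (simp add: I_def)
  qed
  have part3: "\<forall>(l::nat) i. i < n \<longrightarrow>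
        pfun \<rho> n (x ((real l + 1) * \<tau>)) i
          = (pfun \<rho> n (x (real l * \<tau>)) i - 1)
              * exp (Cconst n N k * sin (as0 * fs (pfun \<rho> n (x (samp \<tau> l)) i)) * \<tau>) + 1"
  proof (intro allI impI)
    fix l :: nat and i :: nat
    assume i: "i < n"
    have a1: "(real l + 1) * \<tau> \<in> {real l * \<tau> .. (real l + 1) * \<tau>}" "real l * \<tau> \<in> {real l * \<tau> .. (real l + 1) * \<tau>}"
      using tau by (auto simp: algebra_simps)
    have e: "(real l + 1) * \<tau> - real l * \<tau> = \<tau>" by (simp add: algebra_simps)
    show "pfun \<rho> n (x ((real l + 1) * \<tau>)) i
          = (pfun \<rho> n (x (real l * \<tau>)) i - 1)
              * exp (Cconst n N k * sin (as0 * fs (pfun \<rho> n (x (samp \<tau> l)) i)) * \<tau>) + 1"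
      using pf[OF i a1(1)] pf[OF i a1(2)] s0eq[OF i, of l] e by (simp add: lam_def)
  qed
  show ?thesis by (rule conjI[OF part1 conjI[OF part2 part3]])
qed


end
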